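(* Let $\lambda,\mu\in\mathbb{C}^*$, $\alpha,\beta\in\mathbb{C}$ and $t,t'\in\{1,-1\}$. Then: (i) $\Pi(\mathcal{N}_t(\lambda,\alpha))\not\cong\mathcal{N}_{t'}(\mu',\beta')$ for any $\mu'\in\mathbb{C}^*$, $\beta'\in\mathbb{C}$; (ii) $\mathcal{N}_t(\lambda,\alpha)\cong\mathcal{N}_{t'}(\mu,\beta)$ if and only if $\lambda=\mu$, $\alpha=\beta$ and $t=t'$.
   Context: The twisted $N=2$ superconformal algebra $\mathcal{T}$ is the Lie superalgebra over $\mathbb{C}$ with basis $\{L_m, I_r, G_p\mid m\in\mathbb{Z}, r\in\frac12+\mathbb{Z}, p\in\frac12\mathbb{Z}\}$, even part spanned by the $L_m,I_r$, odd part by the $G_p$, only nonzero brackets $[L_m,L_n]=(m-n)L_{m+n}$, $[L_m,I_r]=-rI_{m+r}$, $[L_m,G_p]=(\frac m2-p)G_{m+p}$, $[I_r,G_p]=G_{r+p}$, $[G_p,G_q]=(-1)^{2p}2L_{p+q}$ if $p+q\in\mathbb{Z}$, $[G_p,G_q]=(-1)^{2p+1}(p-q)I_{p+q}$ if $p+q\in\frac12+\mathbb{Z}$. Modules are $\mathbb{Z}_2$-graded and isomorphisms preserve parity; $\Pi$ is the parity-change functor. For $p\in\frac12\mathbb{Z}$, $\lambda^p$ means $(\lambda^{1/2})^{2p}$ for a fixed square root (likewise for $\mu$). For $\lambda\in\mathbb{C}^*,\alpha\in\mathbb{C},t=\pm1$, $\mathcal{N}_t(\lambda,\alpha)$ is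 the space $\mathbb{C}[x]\mathbf{1}_{\bar0}\oplus\mathbb{C}[y]\mathbf{1}_{\bar1}$ (even part $\mathbb{C}[x]\mathbf{1}_{\bar0}$, odd part $\mathbb{C}[y]\mathbf{1}_{\bar1}$; write $f(x)$ for $f(x)\mathbf{1}_{\bar0}$, $g(y)$ for $g(y)\mathbf{1}_{\bar1}$) with $L_mf(x)=\lambda^m(x+m\alpha)f(x+m)$, $L_mg(y)=\lambda^m(y+m(\alpha+\frac12))g(y+m)$, $I_rf(x)=-2t^{2r}\lambda^r\alpha f(x+r)$, $I_rg(y)=t^{2r}\lambda^r(1-2\alpha)g(y+r)$, $G_pf(x)=t^{2p}\lambda^pf(y+p)$, $G_pg(y)=(-t)^{2p}\lambda^p(x+2p\alpha)g(x+p)$, for $m\in\mathbb{Z}$, $r\in\frac12+\mathbb{Z}$, $p\in\frac12\mathbb{Z}$. *)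

theory Defs
  imports Complex_Main "HOL-Computational_Algebra.Polynomial"
begin

text \<open>
  An element of the module N_t(lambda,alpha) is a pair (f, g) of complex polynomials,
  standing for f(x) 1_0 + g(y) 1_1: the even part is {(f,0)}, the odd part is {(0,g)}.
  Half-integer indices are encoded by their doubles: the generator I_r (r in 1/2 + Z)
  is indexed by the odd integer n = 2r, the generator G_p (p in 1/2 Z) by n = 2p.
  The fixed square root of lambda is csqrt lambda, so lambda^(n/2) = csqrt lambda powi n.
\<close>

definition hpow :: "complex \<Rightarrow> int \<Rightarrow> complex" where
  "hpow lam n = csqrt lam powi n"

definition shiftp :: "complex poly \<Rightarrow> complex \<Rightarrow> complex poly" where
  "shiftp f c = pcompose f [:c, 1:]"

definition NL :: "int \<Rightarrow> complex \<Rightarrow> complex \<Rightarrow> int \<Rightarrow> complex poly \<times> complex poly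
                   \<Rightarrow> complex poly \<times> complex poly" where
  "NL t lam a m v =
     (smult (lam powi m) ([:of_int m * a, 1:] * shiftp (fst v) (of_int m)),
      smult (lam powi m) ([:of_int m * (a + 1/2), 1:] * shiftp (snd v) (of_int m)))"

text \<open>NI t lam a n acts as I_{n/2} (meaningful for odd n).\<close>
definition NI :: "int \<Rightarrow> complex \<Rightarrow> complex \<Rightarrow> int \<Rightarrow> complex poly \<times> complex poly
                   \<Rightarrow> complex poly \<times> complex poly" where
  "NI t lam a n v =
     (smult (- 2 * (of_int t powi n) * hpow lam n * a) (shiftp (fst v) (of_int n / 2)),
      smult ((of_int t powi n) * hpow lam n * (1 - 2 * a)) (shiftp (snd v) (of_int n / 2)))"

definition NG :: "int \<Rightarrow> complex \<Rightarrow> complex \<Rightarrow> int \<Rightarrow> complex poly \<times> complex poly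
                   \<Rightarrow> complex poly \<times> complex poly" where
  "NG t lam a n v =
     (smult ((- of_int t) powi n * hpow lam n)
        ([:of_int n * a, 1:] * shiftp (snd v) (of_int n / 2)),
      smult ((of_int t powi n) * hpow lam n) (shiftp (fst v) (of_int n / 2)))"

definition padd :: "complex poly \<times> complex poly \<Rightarrow> complex poly \<times> complex poly
                    \<Rightarrow> complex poly \<times> complex poly" where
  "padd v w = (fst v + fst w, snd v + snd w)"

definition pscale :: "complex \<Rightarrow> complex poly \<times> complex poly \<Rightarrow> complex poly \<times> complex poly" where
  "pscale c v = (smult c (fst v), smult c (snd v))"

definition plinear :: "(complex poly \<times> complex poly \<Rightarrow> complex poly \<times> complex poly) \<Rightarrow> bool" where
  "plinear \<phi> \<longleftrightarrow> (\<forall>v w. \<phi> (padd v w) = padd (\<phi> v) (\<phi> w)) \<and> (\<forall>c v. \<phi> (pscale c v) = pscale c (\<phi> v))"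

definition intertwines ::
  "(complex poly \<times> complex poly \<Rightarrow> complex poly \<times> complex poly)
   \<Rightarrow> int \<Rightarrow> complex \<Rightarrow> complex \<Rightarrow> int \<Rightarrow> complex \<Rightarrow> complex \<Rightarrow> bool" where
  "intertwines \<phi> t lam a t' mu b \<longleftrightarrow>
     (\<forall>m v. \<phi> (NL t lam a m v) = NL t' mu b m (\<phi> v)) \<and>
     (\<forall>n v. odd n \<longrightarrow> \<phi> (NI t lam a n v) = NI t' mu b n (\<phi> v)) \<and>
     (\<forall>n v. \<phi> (NG t lam a n v) = NG t' mu b n (\<phi> v))"

definition N_iso :: "int \<Rightarrow> complex \<Rightarrow> complex \<Rightarrow> int \<Rightarrow> complex \<Rightarrow> complex \<Rightarrow> bool" where
  "N_iso t lam a t' mu b \<longleftrightarrow> (\<exists>\<phi>. plinear \<phi> \<and> bij \<phi> \<and>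
      (\<forall>f. snd (\<phi> (f, 0)) = 0) \<and> (\<forall>g. fst (\<phi> (0, g)) = 0) \<and>
      intertwines \<phi> t lam a t' mu b)"

text \<open>Parity-preserving isomorphism Pi(N_t(lam,a)) \<cong> N_t'(mu,b): in Pi(N_t(lam,a)) the
  even part is C[y]1_1 and the odd part is C[x]1_0 with the same action, so such an
  isomorphism is a bijective intertwiner of N_t(lam,a) with N_t'(mu,b) that swaps parity.\<close>
definition Pi_N_iso :: "int \<Rightarrow> complex \<Rightarrow> complex \<Rightarrow> int \<Rightarrow> complex \<Rightarrow> complex \<Rightarrow> bool" where
  "Pi_N_iso t lam a t' mu b \<longleftrightarrow> (\<exists>\<phi>. plinear \<phi> \<and> bij \<phi> \<and>
      (\<forall>f. fst (\<phi> (f, 0)) = 0) \<and> (\<forall>g. snd (\<phi> (0, g)) = 0) \<and>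
      intertwines \<phi> t lam a t' mu b)"

end

theory Submission
  imports Defs
begin

lemma lin_x:
  fixes \<psi> :: "complex poly \<Rightarrow> complex poly"
  assumes add: "\<And>p q. \<psi> (p + q) = \<psi> p + \<psi> q"
    and sc: "\<And>c p. \<psi> (smult c p) = smult c (\<psi> p)"
    and x: "\<And>p. \<psi> ([:0,1:] * p) = [:0,1:] * \<psi> p"
  shows "\<psi> p = p * \<psi> 1"
proof (induction p rule: pCons_induct)
  case 0
  have "\<psi> 0 = \<psi> (smult 0 0)" by simp
  also have "\<dots> = 0" by (simp only: sc) simp
  finally show ?case by simp
next
  case (pCons a p)
  have e: "pCons a p = smult a 1 + [:0,1:] * p" by (simp add: one_pCons)
  have "\<psi> (pCons a p) = \<psi> (smult a 1 + [:0,1:] * p)" by (subst e) (rule refl)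
  also have "\<dots> = smult a (\<psi> 1) + [:0,1:] * (p * \<psi> 1)"
    by (simp only: add sc x pCons.IH)
  also have "\<dots> = (smult a 1 + [:0,1:] * p) * \<psi> 1" by (simp add: algebra_simps)
  also have "\<dots> = pCons a p * \<psi> 1" by (simp only: e[symmetric])
  finally show ?case .
qed

lemma NL0: "NL t lam a 0 v = ([:0,1:] * fst v, [:0,1:] * snd v)"
  by (simp add: NL_def shiftp_def)

lemma unit_const:
  fixes f h :: "complex poly"
  assumes "f * h = 1"
  shows "h = [:coeff h 0:] \<and> coeff h 0 \<noteq> 0"
proof -
  have "f \<noteq> 0" "h \<noteq> 0" using assms by auto
  then have "degree f + degree h = 0" using assms degree_mult_eq by (metis degree_1)
  then have "degree h = 0" by simp
  then have hc: "[:coeff h 0:] = h" by (rule degree_0_id)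
  have "coeff h 0 \<noteq> 0"
  proof
    assume "coeff h 0 = 0"
    then have "h = 0" using hc by simp
    then show False using \<open>h \<noteq> 0\<close> by simp
  qed
  then show ?thesis using hc by simp
qed

context
  fixes \<phi> :: "complex poly \<times> complex poly \<Rightarrow> complex poly \<times> complex poly"
  assumes pl: "plinear \<phi>"
begin

lemma phi_add: "\<phi> (f + f', g + g') = padd (\<phi> (f, g)) (\<phi> (f', g'))"
proof -
  have "(f + f', g + g') = padd (f, g) (f', g')" by (simp add: padd_def)
  then show ?thesis using pl unfolding plinear_def by metis
qed

lemma phi_sc: "\<phi> (smult c f, smult c g) = pscale c (\<phi> (f, g))"
proof -
  have "(smult c f, smult c g) = pscale c (f, g)" by (simp add: pscale_def)
  then show ?thesis using pl unfolding plinear_def by metis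
qed

lemma phi_split: "\<phi> (f, g) = padd (\<phi> (f, 0)) (\<phi> (0, g))"
  using phi_add[of f 0 0 g] by simp

lemma comp_mult:
  assumes itw: "intertwines \<phi> t lam a t' mu b"
    and sel: "sel = fst \<or> sel = snd" and ij: "ij = (\<lambda>f. (f, 0)) \<or> ij = (\<lambda>g. (0, g))"
  shows "sel (\<phi> (ij p)) = p * sel (\<phi> (ij 1))"
proof (rule lin_x[where \<psi> = "\<lambda>p. sel (\<phi> (ij p))"])
  fix p q
  show "sel (\<phi> (ij (p + q))) = sel (\<phi> (ij p)) + sel (\<phi> (ij q))"
    using sel ij phi_add[of p q 0 0] phi_add[of 0 0 p q] by (elim disjE; simp add: padd_def)
next
  fix c p
  show "sel (\<phi> (ij (smult c p))) = smult c (sel (\<phi> (ij p)))"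
    using sel ij phi_sc[of c p 0] phi_sc[of c 0 p] by (elim disjE; simp add: pscale_def)
next
  fix p
  have L: "\<phi> (NL t lam a 0 v) = NL t' mu b 0 (\<phi> v)" for v
    using itw unfolding intertwines_def by blast
  show "sel (\<phi> (ij ([:0,1:] * p))) = [:0,1:] * sel (\<phi> (ij p))"
    using sel ij L[of "(p,0)"] L[of "(0,p)"] by (elim disjE; simp add: NL0)
qed

end


lemma phi_form_iso:
  assumes pl: "plinear \<phi>" and itw: "intertwines \<phi> t lam a t' mu b"
    and p1: "\<forall>f. snd (\<phi> (f, 0)) = 0" and p2: "\<forall>g. fst (\<phi> (0, g)) = 0"
  shows "\<phi> (f, g) = (f * fst (\<phi> (1, 0)), g * snd (\<phi> (0, 1)))"
proof -
  have A: "fst (\<phi> (f, 0)) = f * fst (\<phi> (1, 0))"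
    using comp_mult[OF pl itw, of fst "\<lambda>f. (f, 0)" f] by simp
  have B: "snd (\<phi> (0, g)) = g * snd (\<phi> (0, 1))"
    using comp_mult[OF pl itw, of snd "\<lambda>g. (0, g)" g] by simp
  show ?thesis using phi_split[OF pl, of f g] A B p1 p2 by (simp add: padd_def)
qed

lemma phi_form_pi:
  assumes pl: "plinear \<phi>" and itw: "intertwines \<phi> t lam a t' mu b"
    and p1: "\<forall>f. fst (\<phi> (f, 0)) = 0" and p2: "\<forall>g. snd (\<phi> (0, g)) = 0"
  shows "\<phi> (f, g) = (g * fst (\<phi> (0, 1)), f * snd (\<phi> (1, 0)))"
proof -
  have A: "snd (\<phi> (f, 0)) = f * snd (\<phi> (1, 0))"
    using comp_mult[OF pl itw, of snd "\<lambda>f. (f, 0)" f] by simp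
  have B: "fst (\<phi> (0, g)) = g * fst (\<phi> (0, 1))"
    using comp_mult[OF pl itw, of fst "\<lambda>g. (0, g)" g] by simp
  show ?thesis using phi_split[OF pl, of f g] A B p1 p2 by (simp add: padd_def)
qed

lemma NL1a: "NL t lam a 1 (1, 0) = (smult lam [:a, 1:], 0)"
  by (simp add: NL_def shiftp_def one_pCons)
lemma NL1b: "NL t lam a 1 (0, 1) = (0, smult lam [:a + 1/2, 1:])"
  by (simp add: NL_def shiftp_def one_pCons)
lemma NL1c: "NL t lam a 1 ([:c:], 0) = (smult (lam * c) [:a, 1:], 0)"
  by (simp add: NL_def shiftp_def)
lemma NL1d: "NL t lam a 1 (0, [:c:]) = (0, smult (lam * c) [:a + 1/2, 1:])"
  by (simp add: NL_def shiftp_def)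
lemma NI1a: "NI t lam a 1 ([:c:], 0) = ([:- 2 * of_int t * csqrt lam * a * c:], 0)"
  by (simp add: NI_def shiftp_def hpow_def)
lemma NI1b: "NI t lam a 1 (0, [:c:]) = (0, [:of_int t * csqrt lam * (1 - 2 * a) * c:])"
  by (simp add: NI_def shiftp_def hpow_def)

theorem theorem2p11:
  fixes lam mu a b :: complex and t t' :: int
  assumes "lam \<noteq> 0" "mu \<noteq> 0" "t \<in> {1, -1}" "t' \<in> {1, -1}"
  shows "(\<forall>mu' b'. mu' \<noteq> 0 \<longrightarrow> \<not> Pi_N_iso t lam a t' mu' b')
         \<and> (N_iso t lam a t' mu b \<longleftrightarrow> lam = mu \<and> a = b \<and> t = t')"
proof (rule conjI)
  show "\<forall>mu' b'. mu' \<noteq> 0 \<longrightarrow> \<not> Pi_N_iso t lam a t' mu' b'"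
  proof (intro allI impI notI)
    fix mu' b' :: complex
    assume "mu' \<noteq> 0"
    assume "Pi_N_iso t lam a t' mu' b'"
    then obtain \<phi> where H: "plinear \<phi> \<and> bij \<phi> \<and>
      (\<forall>f. fst (\<phi> (f, 0)) = 0) \<and> (\<forall>g. snd (\<phi> (0, g)) = 0) \<and>
      intertwines \<phi> t lam a t' mu' b'"
      unfolding Pi_N_iso_def by (rule exE)
    note HH = conjunct1[OF H] conjunct1[OF conjunct2[OF H]] conjunct1[OF conjunct2[OF conjunct2[OF H]]]
      conjunct1[OF conjunct2[OF conjunct2[OF conjunct2[OF H]]]] conjunct2[OF conjunct2[OF conjunct2[OF conjunct2[OF H]]]]
    note pl = HH(1) and bj = HH(2) and p1 = HH(3) and p2 = HH(4) and itw = HH(5)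
    define k where "k = fst (\<phi> (0, 1))"
    define h where "h = snd (\<phi> (1, 0))"
    have F: "\<phi> (f, g) = (g * k, f * h)" for f g
      unfolding k_def h_def by (rule phi_form_pi[OF pl itw p1 p2])
    define v where "v = inv \<phi> (0, 1)"
    have v: "\<phi> v = (0, 1)" unfolding v_def by (rule surj_f_inv_f[OF bij_is_surj[OF bj]])
    define w where "w = inv \<phi> (1, 0)"
    have w: "\<phi> w = (1, 0)" unfolding w_def by (rule surj_f_inv_f[OF bij_is_surj[OF bj]])
    have "fst v * h = 1" using v F[of "fst v" "snd v"] by simp
    then have Uh: "h = [:coeff h 0:] \<and> coeff h 0 \<noteq> 0" by (rule unit_const)
    define ch where "ch = coeff h 0"
    have hc: "h = [:ch:]" "ch \<noteq> 0" unfolding ch_def by (rule conjunct1[OF Uh], rule conjunct2[OF Uh])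
    have "snd w * k = 1" using w F[of "fst w" "snd w"] by simp
    then have Uk: "k = [:coeff k 0:] \<and> coeff k 0 \<noteq> 0" by (rule unit_const)
    define ck where "ck = coeff k 0"
    have kc: "k = [:ck:]" "ck \<noteq> 0" unfolding ck_def by (rule conjunct1[OF Uk], rule conjunct2[OF Uk])
    have L: "\<phi> (NL t lam a 1 u) = NL t' mu' b' 1 (\<phi> u)" for u
      using itw unfolding intertwines_def by blast
    have E1: "(0, smult lam [:a, 1:] * h) = NL t' mu' b' 1 (0, [:ch:])"
      using L[of "(1, 0)"] F hc(1) by (simp add: NL1a)
    then have E1': "smult lam [:a, 1:] * [:ch:] = smult (mu' * ch) [:b' + 1/2, 1:]"
      using hc(1) by (simp add: NL1d)
    have c11: "lam * ch = mu' * ch"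
      using arg_cong[OF E1', of "\<lambda>p. coeff p 1"] by simp
    have c10: "lam * a * ch = mu' * ch * (b' + 1/2)"
      using arg_cong[OF E1', of "\<lambda>p. coeff p 0"] by simp
    have lm: "lam = mu'" using c11 hc(2) by simp
    have ab1: "a = b' + 1/2" using c10 lm hc(2) \<open>mu' \<noteq> 0\<close> by simp
    have E2: "(smult lam [:a + 1/2, 1:] * k, 0) = NL t' mu' b' 1 ([:ck:], 0)"
      using L[of "(0, 1)"] F kc(1) by (simp add: NL1b)
    then have E2': "smult lam [:a + 1/2, 1:] * [:ck:] = smult (mu' * ck) [:b', 1:]"
      using kc(1) by (simp add: NL1c)
    have c20: "lam * (a + 1/2) * ck = mu' * ck * b'"
      using arg_cong[OF E2', of "\<lambda>p. coeff p 0"] by simp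
    have ab2: "a + 1/2 = b'" using c20 lm kc(2) \<open>mu' \<noteq> 0\<close> by simp
    show False using ab1 ab2 by simp
  qed
next
  show "N_iso t lam a t' mu b \<longleftrightarrow> lam = mu \<and> a = b \<and> t = t'"
  proof
  assume "N_iso t lam a t' mu b"
  then obtain \<phi> where H: "plinear \<phi> \<and> bij \<phi> \<and>
      (\<forall>f. snd (\<phi> (f, 0)) = 0) \<and> (\<forall>g. fst (\<phi> (0, g)) = 0) \<and>
      intertwines \<phi> t lam a t' mu b"
    unfolding N_iso_def by (rule exE)
  note HH = conjunct1[OF H] conjunct1[OF conjunct2[OF H]] conjunct1[OF conjunct2[OF conjunct2[OF H]]]
    conjunct1[OF conjunct2[OF conjunct2[OF conjunct2[OF H]]]] conjunct2[OF conjunct2[OF conjunct2[OF conjunct2[OF H]]]]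
  note pl = HH(1) and bj = HH(2) and p1 = HH(3) and p2 = HH(4) and itw = HH(5)
  define h where "h = fst (\<phi> (1, 0))"
  define k where "k = snd (\<phi> (0, 1))"
  have F: "\<phi> (f, g) = (f * h, g * k)" for f g
    unfolding k_def h_def by (rule phi_form_iso[OF pl itw p1 p2])
  define v where "v = inv \<phi> (1, 0)"
  have v: "\<phi> v = (1, 0)" unfolding v_def by (rule surj_f_inv_f[OF bij_is_surj[OF bj]])
  define w where "w = inv \<phi> (0, 1)"
  have w: "\<phi> w = (0, 1)" unfolding w_def by (rule surj_f_inv_f[OF bij_is_surj[OF bj]])
  have "fst v * h = 1" using v F[of "fst v" "snd v"] by simp
  then have Uh: "h = [:coeff h 0:] \<and> coeff h 0 \<noteq> 0" by (rule unit_const)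
    define ch where "ch = coeff h 0"
    have hc: "h = [:ch:]" "ch \<noteq> 0" unfolding ch_def by (rule conjunct1[OF Uh], rule conjunct2[OF Uh])
  have "snd w * k = 1" using w F[of "fst w" "snd w"] by simp
  then have Uk: "k = [:coeff k 0:] \<and> coeff k 0 \<noteq> 0" by (rule unit_const)
    define ck where "ck = coeff k 0"
    have kc: "k = [:ck:]" "ck \<noteq> 0" unfolding ck_def by (rule conjunct1[OF Uk], rule conjunct2[OF Uk])
  have L: "\<phi> (NL t lam a 1 u) = NL t' mu b 1 (\<phi> u)" for u
    using itw unfolding intertwines_def by blast
  have I: "\<phi> (NI t lam a 1 u) = NI t' mu b 1 (\<phi> u)" for u
  proof -
    have "odd (1::int)" by simp
    then show ?thesis using itw unfolding intertwines_def by blast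
  qed
  have E1: "(smult lam [:a, 1:] * h, 0) = NL t' mu b 1 ([:ch:], 0)"
    using L[of "(1, 0)"] F hc(1) by (simp add: NL1a)
  then have E1': "smult lam [:a, 1:] * [:ch:] = smult (mu * ch) [:b, 1:]"
    using hc(1) by (simp add: NL1c)
  have c11: "lam * ch = mu * ch"
    using arg_cong[OF E1', of "\<lambda>p. coeff p 1"] by simp
  have c10: "lam * a * ch = mu * ch * b"
    using arg_cong[OF E1', of "\<lambda>p. coeff p 0"] by simp
  have lm: "lam = mu" using c11 hc(2) by simp
  have ab: "a = b" using c10 lm hc(2) \<open>mu \<noteq> 0\<close> by simp
  have s: "csqrt lam \<noteq> 0" using \<open>lam \<noteq> 0\<close> by simp
  have G1: "([:- 2 * of_int t * csqrt lam * a:] * h, 0) = NI t' mu b 1 ([:ch:], 0)"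
    using I[of "(1, 0)"] F hc(1) by (simp add: NI_def shiftp_def hpow_def one_pCons)
  then have G1': "- 2 * of_int t * csqrt lam * a * ch = - 2 * of_int t' * csqrt lam * a * ch"
    using hc(1) lm ab by (auto simp: NI1a)
  have G2: "(0, [:of_int t * csqrt lam * (1 - 2 * a):] * k) = NI t' mu b 1 (0, [:ck:])"
    using I[of "(0, 1)"] F kc(1) by (simp add: NI_def shiftp_def hpow_def one_pCons)
  then have G2': "of_int t * csqrt lam * (1 - 2 * a) * ck = of_int t' * csqrt lam * (1 - 2 * a) * ck"
    using kc(1) lm ab by (auto simp: NI1b)
  have "(of_int t :: complex) = of_int t'"
  proof (cases "a = 0")
    case True
    then have "1 - 2 * a \<noteq> 0" by simp
    then show ?thesis using G2' s kc(2) by simp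
  next
    case False
    then show ?thesis using G1' s hc(2) by simp
  qed
  then show "lam = mu \<and> a = b \<and> t = t'" using lm ab by simp
next
  assume "lam = mu \<and> a = b \<and> t = t'"
  then show "N_iso t lam a t' mu b"
    unfolding N_iso_def plinear_def intertwines_def by (intro exI[of _ id]) auto
  qed
qed

end
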